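(* Let $A,B$ be disjoint infinite sets, $\mathcal M=A\cup B$, and define a metric $\delta$ on $\mathcal M$ by $\delta(x,x)=0$, $\delta(x,y)=1$ if $x,y$ lie in different sets among $A,B$, and $\delta(x,y)=2$ if $x\ne y$ lie in the same set. Then for every strictly increasing function $\delta^*:[0,\infty)\to[0,\infty)$ with $\delta^*(0)=0$, the function $\delta^*\circ\delta$ on $\mathcal M\times\mathcal M$ is not of negative type.
   Context: A symmetric function $\rho:\mathcal M\times\mathcal M\to[0,\infty)$ with $\rho(x,x)=0$ is of negative type if for every $n\ge1$, all points $x_1,\dots,x_n\in\mathcal M$ and all real $a_1,\dots,a_n$ with $\sum_i a_i=0$ one has $\sum_{i,j}a_ia_j\,\rho(x_i,x_j)\le0$. *)

theory Defs
  imports Main Complex_Main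
begin

definition negative_type :: "'a set \<Rightarrow> ('a \<Rightarrow> 'a \<Rightarrow> real) \<Rightarrow> bool" where
  "negative_type M \<rho> \<longleftrightarrow>
     (\<forall>n::nat. n \<ge> 1 \<longrightarrow> (\<forall>(x::nat \<Rightarrow> 'a) (a::nat \<Rightarrow> real).
        (\<forall>i<n. x i \<in> M) \<and> (\<Sum>i<n. a i) = 0 \<longrightarrow>
        (\<Sum>i<n. \<Sum>j<n. a i * a j * \<rho> (x i) (x j)) \<le> 0))"

definition two_set_metric :: "'a set \<Rightarrow> 'a set \<Rightarrow> 'a \<Rightarrow> 'a \<Rightarrow> real" where
  "two_set_metric A B x y =
     (if x = y then 0
      else if (x \<in> A \<and> y \<in> B) \<or> (x \<in> B \<and> y \<in> A) then 1
      else 2)"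

end

theory Submission
  imports Defs
begin

lemma sum_split_add: "(\<Sum>i<m+k. g i) = (\<Sum>i<m. g i) + (\<Sum>i<k. g (m+i)) " for g :: "nat \<Rightarrow> real"
  by (induction k) (simp_all add: add.assoc)

lemma sum_off_diag: "i < m \<Longrightarrow> (\<Sum>j<m. (if i = j then 0 else c)) = (real m - 1) * (c::real)"
proof -
  assume i: "i < m"
  have "(\<Sum>j<m. (if i = j then 0 else c)) = (\<Sum>j\<in>{..<m}-{i}. (if i = j then 0 else c))"
    using i by (subst sum.remove[of _ i]) auto
  also have "\<dots> = (\<Sum>j\<in>{..<m}-{i}. c)" by (rule sum.cong) auto
  also have "\<dots> = real (m - 1) * c" using i by simp
  finally show ?thesis using i by (simp add: of_nat_diff)
qed

theorem mainTheorem10: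
  fixes A B :: "'a set" and f :: "real \<Rightarrow> real"
  assumes "A \<inter> B = {}" and "infinite A" and "infinite B"
    and "strict_mono_on {0..} f" and "\<forall>t\<ge>0. f t \<ge> 0" and "f 0 = 0"
  shows "\<not> negative_type (A \<union> B) (\<lambda>x y. f (two_set_metric A B x y))"
proof
  assume nt: "negative_type (A \<union> B) (\<lambda>x y. f (two_set_metric A B x y))"
  obtain xa :: "nat \<Rightarrow> 'a" where xa: "inj xa" "range xa \<subseteq> A"
    using infinite_countable_subset assms(2) by blast
  obtain xb :: "nat \<Rightarrow> 'a" where xb: "inj xb" "range xb \<subseteq> B"
    using infinite_countable_subset assms(3) by blast
  define p where "p = f 1"
  define q where "q = f 2"
  have p0: "0 < p" proof -
    have "f 0 < f 1" using assms(4) by (rule strict_mono_onD) auto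
    thus ?thesis using assms(6) by (simp add: p_def)
  qed
  have pq: "p < q" unfolding p_def q_def using assms(4) by (rule strict_mono_onD) auto
  obtain m :: nat where m: "q < real m * (q - p)"
    using ex_less_of_nat_mult[of "q - p" q] pq by auto
  have m1: "m \<ge> 1" using m p0 pq by (cases m) auto
  define \<rho> where "\<rho> = (\<lambda>x y. f (two_set_metric A B x y))"
  define x where "x = (\<lambda>i. if i < m then xa i else xb (i - m))"
  define a :: "nat \<Rightarrow> real" where "a = (\<lambda>i. if i < m then 1 else -1)"
  have AA: "\<rho> (xa i) (xa j) = (if i = j then 0 else q)" for i j
    using xa assms(1,6) by (auto simp: \<rho>_def two_set_metric_def q_def inj_eq)
  have BB: "\<rho> (xb i) (xb j) = (if i = j then 0 else q)" for i j
    using xb assms(1,6) by (auto simp: \<rho>_def two_set_metric_def q_def inj_eq)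
  have AB: "\<rho> (xa i) (xb j) = p" for i j
    using xa xb assms(1) by (auto simp: \<rho>_def two_set_metric_def p_def)
  have BA: "\<rho> (xb i) (xa j) = p" for i j
    using xa xb assms(1) by (auto simp: \<rho>_def two_set_metric_def p_def)
  have row1: "(\<Sum>j<m+m. a i * a j * \<rho> (x i) (x j)) = (real m - 1) * q - real m * p"
    if "i < m" for i
    using that by (simp add: sum_split_add a_def x_def AA AB sum_off_diag)
  have row2: "(\<Sum>j<m+m. a (m+i) * a j * \<rho> (x (m+i)) (x j)) = (real m - 1) * q - real m * p"
    if "i < m" for i
    using that by (simp add: sum_split_add a_def x_def BB BA sum_off_diag)
  have tot: "(\<Sum>i<m+m. \<Sum>j<m+m. a i * a j * \<rho> (x i) (x j))
      = 2 * real m * ((real m - 1) * q - real m * p)"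
  proof -
    have "(\<Sum>i<m+m. \<Sum>j<m+m. a i * a j * \<rho> (x i) (x j))
      = (\<Sum>i<m. \<Sum>j<m+m. a i * a j * \<rho> (x i) (x j))
        + (\<Sum>i<m. \<Sum>j<m+m. a (m+i) * a j * \<rho> (x (m+i)) (x j))"
      by (rule sum_split_add)
    also have "\<dots> = (\<Sum>i<m. (real m - 1) * q - real m * p) + (\<Sum>i<m. (real m - 1) * q - real m * p)"
      using row1 row2 by simp
    finally show ?thesis by (simp add: algebra_simps)
  qed
  have "(\<Sum>i<m+m. a i) = 0" by (simp add: sum_split_add a_def)
  moreover have "\<forall>i<m+m. x i \<in> A \<union> B" using xa xb by (auto simp: x_def)
  ultimately have "(\<Sum>i<m+m. \<Sum>j<m+m. a i * a j * \<rho> (x i) (x j)) \<le> 0"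
    using nt m1 unfolding negative_type_def \<rho>_def by force
  moreover have "0 < 2 * real m * ((real m - 1) * q - real m * p)"
    using m m1 by (intro mult_pos_pos) (auto simp: algebra_simps)
  ultimately show False using tot by linarith
qed

end
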